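(* Let $\mathcal R(P_n)=u_1,\ldots,u_m$. (1) For $n\geq2$: if $x_n\mid u_i$ for some $i$, then $x_n\mid u_j$ for all $j\geq i$. (2) For $n\geq3$: if $x_{n-2}\mid u_i$ for some $i$, then $x_{n-2}\mid u_j$ for all $j\geq i$. (3) For $n\geq4$: if $\mathcal R(P_{n-2})=v_1,\ldots,v_k$ and $\mathcal R(P_{n-1})=w_1,\ldots,w_\ell$, then $\mathcal R(P_n)=x_{n-1}v_1,\ldots,x_{n-1}v_k,x_nw_1,\ldots,x_nw_\alpha$ for some $\alpha<\ell$.
   Context: For $m\geq 1$, $P_m$ is the path graph on vertices $x_1,\ldots,x_m$ with edges $\{x_i,x_{i+1}\}$. The rooted list $\mathcal R(P_m)$ (a list of the minimal monomial generators of the cover ideal of $P_m$) is defined recursively: $\mathcal R(P_1)$ empty; $\mathcal R(P_2)=x_1,x_2$; $\mathcal R(P_3)=x_2,x_1x_3$; $\mathcal R(P_4)=x_1x_3,x_2x_3,x_2x_4$; for $m\geq5$, if $\mathcal R(P_{m-2})=u_1,\ldots,u_r$ and $\mathcal R(P_{m-3})=v_1,\ldots,v_s$, then $\mathcal R(P_m)=x_{m-1}u_1,\ldots,x_{m-1}u_r,x_mx_{m-2}v_1,\ldots,x_mx_{m-2}v_s$. *)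

theory Defs
  imports Main "HOL-Library.Multiset"
begin

text \<open>Monomials in the variables x_1, x_2, ... are represented as multisets of
variable indices (x_i = {#i#}, product = multiset sum, x_i divides u iff i \<in># u).
The rooted list R(P_m) is a list of monomials.  R 0 is a dummy value ([]).\<close>

fun rooted :: "nat \<Rightarrow> nat multiset list" where
  "rooted 0 = []"
| "rooted (Suc 0) = []"
| "rooted (Suc (Suc 0)) = [{#1#}, {#2#}]"
| "rooted (Suc (Suc (Suc 0))) = [{#2#}, {#1, 3#}]"
| "rooted (Suc (Suc (Suc (Suc 0)))) = [{#1, 3#}, {#2, 3#}, {#2, 4#}]"
| "rooted (Suc (Suc (Suc (Suc (Suc k))))) =
     map (\<lambda>u. {#k + 4#} + u) (rooted (k + 3)) @
     map (\<lambda>v. {#k + 5#} + {#k + 3#} + v) (rooted (k + 2))"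

end

theory Submission
  imports Defs
begin

lemma rooted_step: "rooted (k + 5) =
     map (\<lambda>u. {#k + 4#} + u) (rooted (k + 3)) @
     map (\<lambda>v. {#k + 5#} + {#k + 3#} + v) (rooted (k + 2))"
proof -
  have "k + 5 = Suc (Suc (Suc (Suc (Suc k))))" by simp
  then show ?thesis by (simp only: rooted.simps)
qed

lemma rooted_vars: "u \<in> set (rooted m) \<Longrightarrow> x \<in># u \<Longrightarrow> x \<le> m"
proof (induction m arbitrary: u rule: rooted.induct)
  case (6 k)
  then show ?case by (auto simp: numeral_eq_Suc) (meson le_SucI)+
qed auto

lemma rooted_len: "2 \<le> m \<Longrightarrow> 0 < length (rooted m)"
proof (induction m rule: rooted.induct)
  case (6 k)
  then show ?case by simp
qed auto

definition sc :: "('a \<Rightarrow> bool) \<Rightarrow> 'a list \<Rightarrow> bool" where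
  "sc P xs = (\<forall>i j. i \<le> j \<longrightarrow> j < length xs \<longrightarrow> P (xs ! i) \<longrightarrow> P (xs ! j))"

lemma sc_append: "sc P xs \<Longrightarrow> \<forall>y\<in>set ys. P y \<Longrightarrow> sc P (xs @ ys)"
  unfolding sc_def
  by (auto simp: nth_append)

lemma sc_map: "sc P (map f xs) = sc (\<lambda>x. P (f x)) xs"
  unfolding sc_def by auto

lemma sc_none: "\<forall>x\<in>set xs. \<not> P x \<Longrightarrow> sc P xs"
  unfolding sc_def by auto

lemma part1: "2 \<le> n \<Longrightarrow> sc (\<lambda>u. n \<in># u) (rooted n)"
proof -
  assume n: "2 \<le> n"
  have "n = 2 \<or> n = 3 \<or> n = 4 \<or> n = (n - 5) + 5" using n by arith
  then consider "n = 2" | "n = 3" | "n = 4" | k where "n = k + 5" by blast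
  then show ?thesis
  proof cases
    case 4
    have a: "sc (\<lambda>u. n \<in># u) (map (\<lambda>u. {#k + 4#} + u) (rooted (k + 3)))"
      apply (rule sc_none) using rooted_vars[of _ "k+3" "k+5"] 4 by auto
    show ?thesis unfolding 4 rooted_step
      by (rule sc_append[OF a[unfolded 4]]) auto
  qed (auto simp: sc_def numeral_eq_Suc nth_Cons split: nat.splits)
qed

lemma part2: "3 \<le> n \<Longrightarrow> sc (\<lambda>u. n - 2 \<in># u) (rooted n)"
proof -
  assume n: "3 \<le> n"
  have "n = 3 \<or> n = 4 \<or> n = (n - 5) + 5" using n by arith
  then consider "n = 3" | "n = 4" | k where "n = k + 5" by blast
  then show ?thesis
  proof cases
    case 3
    have a: "sc (\<lambda>u. k + 3 \<in># u) (map (\<lambda>u. {#k + 4#} + u) (rooted (k + 3)))"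
      unfolding sc_map using part1[of "k+3"] by simp
    have b: "k + 5 - 2 = k + 3" by simp
    show ?thesis unfolding 3 rooted_step b
      by (rule sc_append[OF a]) auto
  qed (auto simp: sc_def numeral_eq_Suc nth_Cons split: nat.splits)
qed

lemma part3: "4 \<le> n \<Longrightarrow> (\<exists>\<alpha> < length (rooted (n - 1)).
        rooted n = map (\<lambda>v. {#n - 1#} + v) (rooted (n - 2)) @
                   map (\<lambda>w. {#n#} + w) (take \<alpha> (rooted (n - 1))))"
proof -
  assume n: "4 \<le> n"
  have "n = 4 \<or> n = 5 \<or> n = (n - 6) + 6" using n by arith
  then consider "n = 4" | "n = 5" | k where "n = k + 6" by blast
  then show ?thesis
  proof cases
    case 1
    show ?thesis unfolding 1 by (rule exI[of _ 1]) (simp add: numeral_eq_Suc)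
  next
    case 2
    show ?thesis unfolding 2 by (rule exI[of _ 2]) (simp add: numeral_eq_Suc)
  next
    case 3
    have e1: "rooted (k + 6) = map (\<lambda>u. {#k + 5#} + u) (rooted (k + 4)) @
     map (\<lambda>v. {#k + 6#} + {#k + 4#} + v) (rooted (k + 3))"
      using rooted_step[of "k+1"] by (simp add: ac_simps numeral_eq_Suc)
    have e2: "rooted (k + 5) = map (\<lambda>u. {#k + 4#} + u) (rooted (k + 3)) @
     map (\<lambda>v. {#k + 5#} + {#k + 3#} + v) (rooted (k + 2))"
      by (rule rooted_step)
    have l: "0 < length (rooted (k + 2))" by (rule rooted_len) simp
    show ?thesis unfolding 3
      apply (rule exI[of _ "length (rooted (k + 3))"])
      using l by (simp add: e1 e2 add.assoc numeral_eq_Suc)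
  qed
qed

theorem lemma3p7:
  shows
   "(\<forall>n i j. 2 \<le> n \<longrightarrow> i \<le> j \<longrightarrow> j < length (rooted n) \<longrightarrow>
        n \<in># rooted n ! i \<longrightarrow> n \<in># rooted n ! j)
  \<and> (\<forall>n i j. 3 \<le> n \<longrightarrow> i \<le> j \<longrightarrow> j < length (rooted n) \<longrightarrow>
        n - 2 \<in># rooted n ! i \<longrightarrow> n - 2 \<in># rooted n ! j)
  \<and> (\<forall>n. 4 \<le> n \<longrightarrow> (\<exists>\<alpha> < length (rooted (n - 1)).
        rooted n = map (\<lambda>v. {#n - 1#} + v) (rooted (n - 2)) @
                   map (\<lambda>w. {#n#} + w) (take \<alpha> (rooted (n - 1)))))"
  using part1 part2 part3 unfolding sc_def by blast

end
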